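(* The set of natural numbers that occur exactly twice in $(a(n))_{n\ge 0}$ equals the set of natural numbers that are not of the form $\lfloor \varphi k+\tfrac12\rfloor$ for any integer $k\ge 0$ (i.e., the complement in $\mathbb{N}$ of $\{\lfloor \varphi k+\tfrac12\rfloor : k\ge 0\}$).
   Context: $\mathbb{N}=\{0,1,2,\ldots\}$, $\varphi=(1+\sqrt5)/2$. Let $(F_n)_{n\ge 0}$ be the Fibonacci numbers: $F_0=0$, $F_1=1$, $F_n=F_{n-1}+F_{n-2}$ for $n\ge 2$. Define $(a(n))_{n\ge 0}$ (OEIS A105774) by $a(0)=0$, $a(1)=1$, and for $n\ge 2$, $a(n)=F_{j+1}-a(n-F_j)$, where $j\ge 2$ is the unique index with $F_j<n\le F_{j+1}$. *)

theory Defs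
  imports Complex_Main "HOL-Number_Theory.Fib"
begin

definition fib_index :: "nat \<Rightarrow> nat" where
  "fib_index n = (THE j. 2 \<le> j \<and> fib j < n \<and> n \<le> fib (Suc j))"

lemma le_fib_Suc: "n \<le> fib (Suc n)"
proof (induction n rule: nat_less_induct)
  case (1 n)
  show ?case
  proof (cases "n < 2")
    case True then show ?thesis by (cases n) (auto simp: numeral_2_eq_2 less_Suc_eq)
  next
    case False
    then obtain m where m: "n = Suc (Suc m)" by (metis add_2_eq_Suc le_Suc_ex not_less)
    have "m \<le> fib (Suc m)" "Suc m \<le> fib (Suc (Suc m))" using 1 m by auto
    moreover have "fib (Suc n) = fib (Suc (Suc m)) + fib (Suc m)" using m by simp
    moreover have "fib (Suc m) \<ge> 1" using fib_neq_0_nat[of "Suc m"] by simp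
    ultimately show ?thesis using m by linarith
  qed
qed

lemma fib_index_ex: "2 \<le> n \<Longrightarrow> \<exists>j. 2 \<le> j \<and> fib j < n \<and> n \<le> fib (Suc j)"
proof -
  assume n: "2 \<le> n"
  have ex: "\<exists>j. n \<le> fib (Suc j)"
    using le_fib_Suc by blast
  define j where "j = (LEAST j. n \<le> fib (Suc j))"
  have j1: "n \<le> fib (Suc j)" unfolding j_def using ex by (rule LeastI_ex)
  have j2: "\<And>i. i < j \<Longrightarrow> \<not> n \<le> fib (Suc i)" unfolding j_def using not_less_Least by blast
  have "j \<ge> 2"
  proof (rule ccontr)
    assume "\<not> 2 \<le> j"
    then have "j = 0 \<or> j = 1" by auto
    then show False using j1 n by (auto simp: numeral_2_eq_2)
  qed
  moreover have "fib j < n"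
    using j2[of "j - 1"] \<open>j \<ge> 2\<close> by (simp add: Suc_diff_1 not_le)
  ultimately show ?thesis using j1 by blast
qed

lemma fib_index_props:
  assumes "2 \<le> n"
  shows "2 \<le> fib_index n \<and> fib (fib_index n) < n \<and> n \<le> fib (Suc (fib_index n))"
proof -
  have uniq: "\<And>i j :: nat. fib i < n \<and> n \<le> fib (Suc i) \<Longrightarrow> 2 \<le> i \<Longrightarrow> fib j < n \<and> n \<le> fib (Suc j) \<Longrightarrow> 2 \<le> j \<Longrightarrow> i = j"
  proof -
    fix i j :: nat
    assume a: "fib i < n \<and> n \<le> fib (Suc i)" "2 \<le> i" "fib j < n \<and> n \<le> fib (Suc j)" "2 \<le> j"
    show "i = j"
    proof (rule ccontr)
      assume "i \<noteq> j"
      then have "i < j \<or> j < i" by auto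
      then show False
      proof
        assume "i < j" then have "fib (Suc i) \<le> fib j" by (simp add: fib_mono)
        then show False using a by linarith
      next
        assume "j < i" then have "fib (Suc j) \<le> fib i" by (simp add: fib_mono)
        then show False using a by linarith
      qed
    qed
  qed
  obtain j where j: "2 \<le> j \<and> fib j < n \<and> n \<le> fib (Suc j)" using fib_index_ex[OF assms] by blast
  have "fib_index n = j" unfolding fib_index_def
    by (rule the_equality) (use j uniq in blast)+
  then show ?thesis using j by simp
qed

function A105774 :: "nat \<Rightarrow> nat" where
  "A105774 n = (if n = 0 then 0 else if n = 1 then 1
     else fib (Suc (fib_index n)) - A105774 (n - fib (fib_index n)))"
  by auto
termination
proof (relation "measure id")
  fix n :: nat
  assume "\<not> n = 0" "\<not> n = 1"
  then have "2 \<le> n" by auto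
  from fib_index_props[OF this] have "2 \<le> fib_index n" "fib (fib_index n) < n" by auto
  moreover have "0 < fib (fib_index n)" using \<open>2 \<le> fib_index n\<close> by (simp add: fib_neq_0_nat)
  ultimately show "(n - fib (fib_index n), n) \<in> measure id" using \<open>2 \<le> n\<close> by auto
qed simp

end

theory Submission
  imports Defs
begin

lemma s5b: "2 < sqrt (5::real)" "sqrt 5 < (3::real)"
proof -
  show "2 < sqrt (5::real)" by (rule real_less_rsqrt) simp
  show "sqrt 5 < (3::real)" by (rule real_less_lsqrt) simp_all
qed
definition ph :: real where "ph = (1 + sqrt 5) / 2"
definition ps :: real where "ps = (1 - sqrt 5) / 2"
lemma s5: "sqrt 5 * sqrt 5 = (5::real)" by simp

lemma ph_ps: "ph + ps = 1" "ph * ps = -1" "ph - ps = sqrt 5"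
proof -
  show "ph + ps = 1" "ph - ps = sqrt 5" by (simp_all add: ph_def ps_def field_simps)
  have "ph * ps = (1 - sqrt 5 * sqrt 5) / 4" by (simp add: ph_def ps_def field_simps)
  then show "ph * ps = -1" by simp
qed

lemma ph_gt: "1 < ph" "ph < 2" using s5b by (auto simp: ph_def)
lemma ps_b: "-1 < ps" "ps < 0" "ps*ps < 1/2" 
proof -
  show "-1 < ps" "ps < 0" using s5b by (auto simp: ps_def)
  have "ps * ps = (6 - 2 * sqrt 5)/4" by (simp add: ps_def field_simps)
  then show "ps*ps < 1/2" using s5b by simp
qed
lemma binet: "real (fib n) = (ph ^ n - ps ^ n) / sqrt 5"
  using fib_closed_form[of n] by (simp add: ph_def ps_def)

lemma e_form: "real (fib (Suc j)) = ph * real (fib j) + ps ^ j"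
proof -
  have a: "sqrt 5 * real (fib n) = ph ^ n - ps ^ n" for n by (simp add: binet)
  have "sqrt 5 * real (fib (Suc j)) = ph ^ Suc j - ps ^ Suc j" by (rule a)
  also have "\<dots> = ph * (ph ^ j - ps ^ j) + ps ^ j * (ph - ps)" by (simp add: algebra_simps)
  also have "\<dots> = ph * (sqrt 5 * real (fib j)) + ps ^ j * sqrt 5" by (simp only: a ph_ps(3))
  also have "\<dots> = sqrt 5 * (ph * real (fib j) + ps ^ j)" by (simp add: algebra_simps)
  finally show ?thesis by simp
qed

lemma cassini_r: "ps ^ j * (ps ^ j + sqrt 5 * real (fib j)) = (-1) ^ j"
proof -
  have "ps ^ j + sqrt 5 * real (fib j) = ph ^ j" by (simp add: binet)
  then have "ps ^ j * (ps ^ j + sqrt 5 * real (fib j)) = (ps * ph) ^ j" by (simp add: power_mult_distrib)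
  then show ?thesis using ph_ps(2) by (simp add: mult.commute)
qed

lemma norm1:
  fixes p q :: nat
  assumes "\<bar>int p ^ 2 - int p * int q - int q ^ 2\<bar> = 1"
  shows "(p = 0 \<and> q = 1) \<or> (\<exists>i. p = fib (Suc i) \<and> q = fib i)"
  using assms
proof (induction "p+q" arbitrary: p q rule: less_induct)
  case less
  show ?case
  proof (cases "q = 0")
    case True
    then have "int p * int p = 1" using less.prems by (simp add: power2_eq_square)
    then have "p * p = 1" by (metis of_nat_1 of_nat_eq_iff of_nat_mult)
    then have "p = 1" by simp
    then show ?thesis using True by (intro disjI2 exI[of _ 0]) simp
  next
    case q: False
    show ?thesis
    proof (cases "p < q")
      case True
      then have "int q \<ge> int p + 1" by simp
      then have h: "int q ^ 2 \<ge> (int p + 1) ^ 2" by (intro power_mono) auto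
      have pq0: "int p * int q \<ge> 0" by simp
      have h': "int q * int q \<ge> int p * int p + 2*int p + 1" using h by (simp add: power2_eq_square algebra_simps)
      have "int q ^ 2 + int p * int q - int p ^ 2 \<ge> 2 * int p + 1"
        using h' pq0 unfolding power2_eq_square by linarith
      then have e: "int q ^ 2 + int p * int q - int p ^ 2 = 1" using less.prems by linarith
      then have "int p \<le> 0" using \<open>int q ^ 2 + int p * int q - int p ^ 2 \<ge> 2 * int p + 1\<close> by linarith
      then have "p = 0" by simp
      then have "int q * int q = 1" using e by (simp add: power2_eq_square)
      then have "q * q = 1" by (metis of_nat_1 of_nat_eq_iff of_nat_mult)
      then have "q = 1" by simp
      then show ?thesis using \<open>p = 0\<close> by simp
    next
      case False
      define r where "r = p - q"
      have pr: "int p = int q + int r" using False by (simp add: r_def)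
      have "\<bar>int q ^ 2 - int q * int r - int r ^ 2\<bar> = 1"
        using less.prems unfolding pr by (simp add: power2_eq_square algebra_simps abs_minus_commute)
      moreover have "q + r < p + q" using q False by (simp add: r_def)
      ultimately have "(q = 0 \<and> r = 1) \<or> (\<exists>i. q = fib (Suc i) \<and> r = fib i)"
        using less.hyps by blast
      then obtain i where "q = fib (Suc i)" "r = fib i" using q by blast
      then have "p = fib (Suc (Suc i))" using False by (simp add: r_def)
      then show ?thesis using \<open>q = fib (Suc i)\<close> by blast
    qed
  qed
qed

lemma not3: "\<bar>(p::int)^2 - p*q - q^2\<bar> \<noteq> 3"
proof
  assume a: "\<bar>p^2 - p*q - q^2\<bar> = 3"
  then have d: "3 dvd (p^2 - p*q - q^2)" by (metis dvd_abs_iff dvd_refl)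
  define a where "a = p div 3"
  define r where "r = p mod 3"
  define b where "b = q div 3"
  define t where "t = q mod 3"
  have pq: "p = 3*a + r" "q = 3*b + t" by (simp_all add: a_def r_def b_def t_def)
  have "p^2 - p*q - q^2 = 3 * (3*a*a + 2*a*r - 3*a*b - a*t - r*b - 3*b*b - 2*b*t) + (r*r - r*t - t*t)"
    unfolding pq by (simp add: power2_eq_square algebra_simps)
  then have d2: "3 dvd (r*r - r*t - t*t)" using d by (metis dvd_add_right_iff dvd_triv_left)
  have "r \<in> {0,1,2}" "t \<in> {0,1,2}" by (auto simp: r_def t_def)
  then have "r = 0 \<and> t = 0" using d2 by (elim insertE emptyE; simp)
  then have "p mod 3 = 0 \<and> q mod 3 = 0" by (simp add: r_def t_def)
  then obtain a b where "p = 3*a" "q = 3*b" by (metis dvd_def mod_0_imp_dvd)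
  then have "p^2 - p*q - q^2 = 9 * (a^2 - a*b - b^2)" by (simp add: power2_eq_square algebra_simps)
  then have "9 dvd \<bar>p^2 - p*q - q^2\<bar>" by simp
  then show False using a by simp
qed

lemma oddN: "odd (p::int) \<Longrightarrow> even q \<Longrightarrow> odd (p^2 - p*q - q^2)"
  by (auto simp: power2_eq_square)

lemma normid: "(P - Q*ph)*(P - Q*ps) = P^2 - P*Q - Q^2"
proof -
  have "(P - Q*ph)*(P - Q*ps) = P^2 - P*Q*(ph+ps) + Q^2*(ph*ps)" by (simp add: algebra_simps power2_eq_square)
  then show ?thesis by (simp add: ph_ps)
qed

lemma psi_cmp:
  assumes a: "\<bar>ps^i\<bar> \<le> 2*\<bar>ps^j\<bar>" and b: "ps^i * ps^j > 0" and c: "i \<le> j+1"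
  shows "i = j"
proof (rule ccontr)
  assume ne: "i \<noteq> j"
  have aps: "0 < \<bar>ps\<bar>" "\<bar>ps\<bar> < 1" using ps_b by auto
  consider "i + 2 \<le> j" | "i + 1 = j" | "i = j + 1" using ne c by linarith
  then show False
  proof cases
    case 1
    have "\<bar>ps\<bar>^j = \<bar>ps\<bar>^i * \<bar>ps\<bar>^(j-i)" using 1 by (simp add: power_add[symmetric])
    moreover have "\<bar>ps\<bar>^(j-i) \<le> \<bar>ps\<bar>^2" using 1 aps by (intro power_decreasing) auto
    moreover have "\<bar>ps\<bar>^2 < 1/2" using ps_b by (simp add: power2_eq_square)
    moreover have "0 < \<bar>ps\<bar>^i" using aps by simp
    ultimately have "\<bar>ps\<bar>^j \<le> \<bar>ps\<bar>^i * \<bar>ps\<bar>^2" "\<bar>ps\<bar>^i * \<bar>ps\<bar>^2 < \<bar>ps\<bar>^i * (1/2)"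
      by (auto intro: mult_left_mono mult_strict_left_mono)
    then have "\<bar>ps\<bar>^j < \<bar>ps\<bar>^i * (1/2)" by linarith
    then show False using a by (simp add: power_abs)
  next
    case 2
    then have "ps^i * ps^j = (ps^i)^2 * ps" by (auto simp: power2_eq_square)
    moreover have "(ps^i)^2 * ps < 0" using ps_b by (simp add: mult_pos_neg)
    ultimately show False using b by simp
  next
    case 3
    then have "ps^i * ps^j = (ps^j)^2 * ps" by (auto simp: power2_eq_square)
    moreover have "(ps^j)^2 * ps < 0" using ps_b by (simp add: mult_pos_neg)
    ultimately show False using b by simp
  qed
qed

lemma fin:
  assumes N: "\<bar>int pn^2 - int pn*int qn - int qn^2\<bar> = 1" and ev: "even qn"
    and pb: "pn \<le> 2*fib (Suc j)" and j: "1 \<le> j"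
    and d1: "\<bar>real qn*ph - real pn\<bar> \<le> 2*\<bar>ps^j\<bar>" and d2: "(real qn * ph - real pn) * ps^j \<le> 0"
  shows "pn = fib (Suc j)"
proof -
  from norm1[OF N] ev obtain i where i: "pn = fib (Suc i)" "qn = fib i" by auto
  have di: "real qn*ph - real pn = -(ps^i)" using e_form[of i] i by simp
  have nz: "ps^i \<noteq> 0" "ps^j \<noteq> 0" using ps_b by auto
  have "ps^i * ps^j \<ge> 0" using d2 unfolding di by (simp add: mult_le_0_iff)
  then have pos: "ps^i * ps^j > 0" using nz by (metis less_eq_real_def mult_eq_0_iff)
  have a: "\<bar>ps^i\<bar> \<le> 2*\<bar>ps^j\<bar>" using d1 unfolding di by simp
  have "i \<le> j + 1"
  proof (rule ccontr)
    assume "\<not> i \<le> j + 1"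
    then have "fib (Suc (Suc (Suc j))) \<le> fib (Suc i)" by (intro fib_mono) simp
    moreover have "fib (Suc (Suc (Suc j))) = 2 * fib (Suc j) + fib j" by simp
    moreover have "fib j > 0" using j by (simp add: fib_neq_0_nat)
    ultimately show False using pb i by linarith
  qed
  from psi_cmp[OF a pos this] show ?thesis using i by simp
qed

lemma Nreal:
  fixes pn qn :: nat
  shows "real_of_int (int pn^2 - int pn*int qn - int qn^2)
       = (- (real qn*ph - real pn)) * (- (real qn*ph - real pn) + real qn * sqrt 5)"
proof -
  have "real_of_int (int pn^2 - int pn*int qn - int qn^2) = (real pn)^2 - real pn * real qn - (real qn)^2"
    by simp
  also have "\<dots> = (real pn - real qn*ph)*(real pn - real qn*ps)" by (rule normid[symmetric])
  also have "real pn - real qn*ps = - (real qn*ph - real pn) + real qn * sqrt 5"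
  proof -
    have h: "ph = ps + sqrt 5" using ph_ps(3) by simp
    show ?thesis by (simp add: h algebra_simps)
  qed
  finally show ?thesis by simp
qed

lemma lemB:
  fixes k m j :: nat
  assumes j: "2 \<le> j" and m1: "1 \<le> m" and mF: "m < fib (Suc j)"
    and h1: "2*m+1 \<noteq> fib (Suc j)" and h2: "2*m \<noteq> fib (Suc j) + 1"
    and x1: "-1/2 \<le> ph * k - m" and x2: "ph*k - m < 1/2"
  shows "-1/2 < ph*k - m + ps^j \<and> ph*k - m + ps^j \<le> 1/2"
proof (rule ccontr)
  assume neg: "\<not> (-1/2 < ph*k - m + ps^j \<and> ph*k - m + ps^j \<le> 1/2)"
  define e where "e = ps^j"
  define F where "F = real (fib j)"
  define x where "x = ph * k - m"
  have eF: "real (fib (Suc j)) = ph*F + e" using e_form by (simp add: e_def F_def)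
  have cas: "e*(e + sqrt 5*F) = (-1)^j" using cassini_r by (simp add: e_def F_def)
  have c1: "\<bar>e*(e + sqrt 5 * F)\<bar> = 1" using cas by simp
  have "\<bar>e\<bar> = \<bar>ps\<bar>^j" by (simp add: e_def power_abs)
  also have "\<dots> \<le> \<bar>ps\<bar>^2" using j ps_b by (intro power_decreasing) auto
  also have "\<dots> < 1/2" using ps_b by (simp add: power2_eq_square)
  finally have ea: "\<bar>e\<bar> < 1/2" .
  have "fib j \<ge> 1" using j by (simp add: fib_neq_0_nat Suc_le_eq)
  then have F1: "F \<ge> 1" by (simp add: F_def)
  have s5: "2 < sqrt 5" "ph < sqrt 5" "0 < ph" using s5b ph_gt by (auto simp: ph_def)
  have "m + 1 \<le> fib (Suc j)" using mF by simp
  then have "real (m + 1) \<le> real (fib (Suc j))" by (simp only: of_nat_le_iff)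
  then have mr: "real m + 1 \<le> real (fib (Suc j))" by simp
  have "ph*k < real m + 1/2" using x2 by simp
  then have "ph*k < ph*F + e - 1/2" using mr eF by linarith
  then have kF: "ph*(F - k) > 1/2 - e" by (simp add: right_diff_distrib)
  have "ph*(F - k) > 0" using kF ea by linarith
  then have Fk: "F - k > 0" using s5 by (simp add: zero_less_mult_iff)
  have sF: "sqrt 5 * F \<ge> 2" using F1 s5 by (smt (verit) mult_le_cancel_left1)
  have k0: "real k \<ge> 0" by simp
  from neg consider (A) "x + e > 1/2" | (B) "x + e \<le> -1/2" unfolding x_def e_def by linarith
  then show False
  proof cases
    case A
    have epos: "e > 0" using A x2 unfolding x_def by linarith
    have "e*(e + sqrt 5*F) > 0" using epos sF by (intro mult_pos_pos) linarith+
    then have ep: "e*(e + sqrt 5*F) = 1" using c1 by simp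
    define pn where "pn = 2*m+1"
    define qn where "qn = 2*k"
    define d where "d = real qn*ph - real pn"
    have dx: "d = 2*x - 1" by (simp add: d_def pn_def qn_def x_def algebra_simps)
    have xx: "x + e > 1/2" "x < 1/2" using A x2 by (simp_all add: x_def)
    have hd: "-2*e < d" "d < 0" unfolding dx using xx by linarith+
    define N where "N = int pn^2 - int pn*int qn - int qn^2"
    have NR: "real_of_int N = (-d)*(-d + 2 * real k * sqrt 5)"
      unfolding N_def Nreal d_def by (simp add: qn_def)
    have q0: "0 \<le> 2 * real k * sqrt 5" using s5 by simp
    have Npos: "real_of_int N > 0" unfolding NR using hd q0 by (intro mult_pos_pos) linarith+
    have "(-d)*(-d + 2 * real k * sqrt 5) < (2*e)*(2*e + 2 * real k * sqrt 5)"
      using hd q0 by (intro mult_strict_mono) linarith+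
    also have "\<dots> = 4*(e*(e + sqrt 5 * F)) - 4*(e*sqrt 5*(F - k))" by (simp add: algebra_simps)
    also have "\<dots> < 4" using ep epos Fk s5 by (simp add: mult_pos_pos)
    finally have "real_of_int N < 4" using NR by simp
    then have N4: "N < 4 \<and> N > 0" using Npos by (intro conjI; linarith)
    have "odd N" unfolding N_def by (rule oddN) (simp_all add: pn_def qn_def)
    moreover have "\<bar>N\<bar> \<noteq> 3" unfolding N_def by (rule not3)
    ultimately have "N = 1" using N4 by presburger
    then have N1: "\<bar>int pn^2 - int pn*int qn - int qn^2\<bar> = 1" by (simp add: N_def)
    have "pn = fib (Suc j)"
    proof (rule fin[OF N1])
      show "even qn" by (simp add: qn_def)
      show "pn \<le> 2 * fib (Suc j)" using mF by (simp add: pn_def)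
      show "1 \<le> j" using j by simp
      show "\<bar>real qn * ph - real pn\<bar> \<le> 2 * \<bar>ps ^ j\<bar>" using hd epos by (simp add: d_def[symmetric] e_def[symmetric])
      show "(real qn * ph - real pn) * ps ^ j \<le> 0" using hd epos
        by (simp add: d_def[symmetric] e_def[symmetric] mult_nonpos_nonneg)
    qed
    then show False using h1 by (simp add: pn_def)
  next
    case B
    have "e \<le> 0" using B x1 unfolding x_def by linarith
    moreover have "e \<noteq> 0" using c1 by auto
    ultimately have eneg: "e < 0" by simp
    have "e + sqrt 5*F > 0" using sF ea by linarith
    then have en: "e*(e + sqrt 5*F) = -1" using c1 eneg by (simp add: abs_if mult_neg_pos split: if_splits)
    define pn where "pn = 2*m-1"
    define qn where "qn = 2*k"
    have pnr: "real pn = 2*real m - 1" using m1 by (simp add: pn_def of_nat_diff)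
    define d where "d = real qn*ph - real pn"
    have dx: "d = 2*x + 1" by (simp add: d_def pnr qn_def x_def algebra_simps)
    have xx: "x + e \<le> -1/2" "x \<ge> -1/2" using B x1 by (simp_all add: x_def)
    have hd: "0 \<le> d" "d \<le> -2*e" unfolding dx using xx by linarith+
    define N where "N = int pn^2 - int pn*int qn - int qn^2"
    have NR: "real_of_int N = (-d)*(-d + 2 * real k * sqrt 5)"
      unfolding N_def Nreal d_def by (simp add: qn_def)
    have q0: "0 \<le> 2 * real k * sqrt 5" using s5 by simp
    have "-d + 2 * real k * sqrt 5 = real pn - real qn * ps"
    proof -
      have h: "ph = ps + sqrt 5" using ph_ps(3) by simp
      show ?thesis by (simp add: h d_def qn_def algebra_simps)
    qed
    moreover have "real qn * ps \<le> 0" using ps_b by (simp add: mult_nonneg_nonpos)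
    moreover have "real pn \<ge> 1" using m1 pnr by simp
    ultimately have pp: "-d + 2 * real k * sqrt 5 \<ge> 1" by linarith
    have Nle: "real_of_int N \<le> 0" unfolding NR using hd pp by (simp add: mult_nonpos_nonneg)
    have "- real_of_int N = d*(-d + 2 * real k * sqrt 5)" using NR by simp
    also have "\<dots> \<le> d * (2 * real k * sqrt 5)" using hd by (simp add: mult_left_mono)
    also have "\<dots> \<le> (-2*e) * (2 * real k * sqrt 5)" using hd q0 by (intro mult_right_mono) auto
    also have "\<dots> = 4 * (-(e*(e + sqrt 5 * F))) + 4*(e*e + e*sqrt 5*(F - k))" by (simp add: algebra_simps)
    also have "\<dots> < 4"
    proof -
      have "sqrt 5 * (F - k) > ph * (F - k)" using s5 Fk by simp
      then have "sqrt 5 * (F - k) > -e" using kF by linarith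
      then have "e * (sqrt 5 * (F - k)) < e * (-e)" using eneg by (intro mult_strict_left_mono_neg)
      then show ?thesis using en by (simp add: algebra_simps)
    qed
    finally have N4: "N > -4 \<and> N \<le> 0" using Nle by (intro conjI; linarith)
    have "odd N" unfolding N_def by (rule oddN) (use m1 in \<open>simp_all add: pn_def qn_def\<close>)
    moreover have "\<bar>N\<bar> \<noteq> 3" unfolding N_def by (rule not3)
    ultimately have "N = -1" using N4 by presburger
    then have N1: "\<bar>int pn^2 - int pn*int qn - int qn^2\<bar> = 1" by (simp add: N_def)
    have "pn = fib (Suc j)"
    proof (rule fin[OF N1])
      show "even qn" by (simp add: qn_def)
      show "pn \<le> 2 * fib (Suc j)" using mF by (simp add: pn_def)
      show "1 \<le> j" using j by simp
      show "\<bar>real qn * ph - real pn\<bar> \<le> 2 * \<bar>ps ^ j\<bar>" using hd eneg by (simp add: d_def[symmetric] e_def[symmetric])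
      show "(real qn * ph - real pn) * ps ^ j \<le> 0" using hd eneg
        by (simp add: d_def[symmetric] e_def[symmetric] mult_nonneg_nonpos)
    qed
    then show False using h2 m1 by (simp add: pn_def)
  qed
qed

definition T :: "nat \<Rightarrow> bool" where
  "T m \<longleftrightarrow> (\<exists>k :: nat. int m = \<lfloor>(1 + sqrt 5) / 2 * real k + 1 / 2\<rfloor>)"

lemma T_iff: "T m \<longleftrightarrow> (\<exists>k::nat. -1/2 \<le> ph * k - m \<and> ph * k - m < 1/2)"
proof -
  have "int m = \<lfloor>ph * real k + 1 / 2\<rfloor> \<longleftrightarrow> (-1/2 \<le> ph * k - m \<and> ph * k - m < 1/2)" for k :: nat
    by (subst eq_commute) (auto simp: floor_eq_iff)
  then show ?thesis unfolding T_def ph_def[symmetric] by simp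
qed

lemma e_small: "2 \<le> j \<Longrightarrow> \<bar>ps^j\<bar> < 1/2"
proof -
  assume j: "2 \<le> j"
  have "\<bar>ps^j\<bar> = \<bar>ps\<bar>^j" by (simp add: power_abs)
  also have "\<dots> \<le> \<bar>ps\<bar>^2" using j ps_b by (intro power_decreasing) auto
  also have "\<dots> < 1/2" using ps_b by (simp add: power2_eq_square)
  finally show ?thesis .
qed

lemma T_fib: "2 \<le> j \<Longrightarrow> T (fib (Suc j))"
  unfolding T_iff
  using e_form[of j] e_small[of j] by (intro exI[of _ "fib j"]) auto

lemma T0: "T 0" unfolding T_iff by (intro exI[of _ 0]) simp

lemma T1: "\<not> T 1"
proof
  assume "T 1"
  then obtain k :: nat where k: "-1/2 \<le> ph * k - 1" "ph * k - 1 < 1/2" unfolding T_iff by auto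
  have "ph > 3/2" using s5b by (simp add: ph_def)
  show False
  proof (cases "k = 0")
    case True then show False using k by simp
  next
    case False
    then have "real k \<ge> 1" by simp
    then have "ph * k \<ge> ph" using ph_gt by simp
    then show False using k \<open>ph > 3/2\<close> by linarith
  qed
qed

lemma fib_Suc_Suc: "fib (Suc (Suc i)) = fib (Suc i) + fib i" by simp

lemma T_refl:
  assumes j: "4 \<le> j" and m1: "fib j < m" and m2: "m < fib (Suc j)"
  shows "T m \<longleftrightarrow> T (fib (Suc j) - m)"
proof -
  define i where "i = j - 2"
  have i: "j = Suc (Suc i)" using j by (simp add: i_def)
  have fj: "fib (Suc j) = fib j + fib (Suc i)" by (simp add: i)
  have fj2: "fib j = fib (Suc i) + fib i" by (simp add: i)
  have fi1: "fib i \<ge> 1" using j i by (simp add: fib_neq_0_nat Suc_le_eq)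
  have e2: "\<bar>ps^j\<bar> < 1/2" using j by (intro e_small) simp
  have eF: "real (fib (Suc j)) = ph * real (fib j) + ps^j" by (rule e_form)
  define m' where "m' = fib (Suc j) - m"
  have m'r: "real m' = real (fib (Suc j)) - real m" using m2 by (simp add: m'_def of_nat_diff)
  have m'b: "1 \<le> m'" "m' < fib (Suc i)" using m1 m2 fj by (auto simp: m'_def)
  show ?thesis unfolding m'_def[symmetric]
  proof
    assume "T m"
    then obtain k :: nat where k: "-1/2 \<le> ph * k - m" "ph * k - m < 1/2" unfolding T_iff by auto
    have "real m + 1 \<le> real (fib (Suc j))" using m2 by (metis Suc_leI of_nat_Suc of_nat_le_iff add.commute)
    then have "ph * k < ph * fib j" using k eF e2 by linarith
    then have kj: "k < fib j" using ph_gt by simp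
    have B: "-1/2 < ph*k - m + ps^j \<and> ph*k - m + ps^j \<le> 1/2"
    proof (rule lemB[of j m k])
      show "2 \<le> j" "1 \<le> m" "m < fib (Suc j)" using j m1 m2 by auto
      show "2 * m + 1 \<noteq> fib (Suc j)" "2*m \<noteq> fib (Suc j) + 1" using m1 fj fj2 fi1 by auto
    qed (use k in auto)
    have "real (fib j - k) = real (fib j) - real k" using kj by (simp add: of_nat_diff)
    then have "ph * real (fib j - k) - real m' = -(ph*k - m + ps^j)"
      using m'r eF by (simp add: algebra_simps)
    then show "T m'" unfolding T_iff using B by (intro exI[of _ "fib j - k"]) auto
  next
    assume "T m'"
    then obtain k :: nat where k: "-1/2 \<le> ph * k - m'" "ph * k - m' < 1/2" unfolding T_iff by auto
    have "real m' + 1 \<le> real (fib (Suc i))" using m'b by (metis Suc_leI of_nat_Suc of_nat_le_iff add.commute)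
    moreover have "real (fib (Suc i)) \<le> real (fib j)" using fj2 by simp
    ultimately have "ph * k < real (fib j)" using k by linarith
    moreover have "1 * real k \<le> ph * k" by (rule mult_right_mono) (use ph_gt in auto)
    ultimately have kj: "k < fib j" by simp
    have B: "-1/2 < ph*k - m' + ps^j \<and> ph*k - m' + ps^j \<le> 1/2"
    proof (rule lemB[of j m' k])
      show "2 \<le> j" "1 \<le> m'" "m' < fib (Suc j)" using j m'b fj by auto
      show "2 * m' + 1 \<noteq> fib (Suc j)" "2*m' \<noteq> fib (Suc j) + 1" using m'b fj fj2 fi1 by auto
    qed (use k in auto)
    have "real (fib j - k) = real (fib j) - real k" using kj by (simp add: of_nat_diff)
    then have "ph * real (fib j - k) - real m = -(ph*k - m' + ps^j)"
      using m'r eF by (simp add: algebra_simps)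
    then show "T m" unfolding T_iff using B by (intro exI[of _ "fib j - k"]) auto
  qed
qed

declare A105774.simps[simp del]

abbreviation a where "a \<equiv> A105774"

lemma fib_lt_imp: "fib x < fib y \<Longrightarrow> x < y"
  using fib_mono[of y x] by (metis not_le)

lemma fib_strict: "2 \<le> x \<Longrightarrow> x < y \<Longrightarrow> fib x < fib y"
proof -
  assume x: "2 \<le> x" and xy: "x < y"
  have "fib (Suc x) \<le> fib y" using xy by (intro fib_mono) simp
  moreover have "fib (Suc x) = fib x + fib (x - 1)"
  proof -
    have xx: "x = Suc (x - 1)" using x by simp
    have "fib (Suc (Suc (x - 1))) = fib (Suc (x - 1)) + fib (x - 1)" by simp
    then show ?thesis using xx by metis
  qed
  moreover have "fib (x - 1) > 0" using x by (intro fib_neq_0_nat) simp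
  ultimately show ?thesis by linarith
qed

lemma fib_index_eq:
  assumes j: "2 \<le> j" and n1: "fib j < n" and n2: "n \<le> fib (Suc j)"
  shows "fib_index n = j"
proof -
  have "fib j \<ge> 1" using j by (simp add: fib_neq_0_nat Suc_le_eq)
  then have "2 \<le> n" using n1 by simp
  from fib_index_props[OF this] have p: "2 \<le> fib_index n" "fib (fib_index n) < n" "n \<le> fib (Suc (fib_index n))"
    by auto
  have "\<not> fib_index n < j"
  proof
    assume "fib_index n < j"
    then have "fib (Suc (fib_index n)) \<le> fib j" by (intro fib_mono) simp
    then show False using p n1 by linarith
  qed
  moreover have "\<not> j < fib_index n"
  proof
    assume "j < fib_index n"
    then have "fib (Suc j) \<le> fib (fib_index n)" by (intro fib_mono) simp
    then show False using p n2 by linarith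
  qed
  ultimately show ?thesis by simp
qed

lemma a0: "a 0 = 0" by (subst A105774.simps) simp
lemma a1: "a 1 = 1" by (subst A105774.simps) simp
lemma a_rec: "2 \<le> n \<Longrightarrow> a n = fib (Suc (fib_index n)) - a (n - fib (fib_index n))"
  by (subst A105774.simps) simp

lemma bounds:
  "2 \<le> n \<Longrightarrow> fib (fib_index n) \<le> a n \<and> a n < fib (Suc (fib_index n))
     \<and> (4 \<le> fib_index n \<longrightarrow> fib (fib_index n) < a n)"
proof (induction n rule: less_induct)
  case (less n)
  define j where "j = fib_index n"
  from fib_index_props[OF less.prems] have p: "2 \<le> j" "fib j < n" "n \<le> fib (Suc j)"
    by (auto simp: j_def)
  define i where "i = j - 1"
  have ji: "j = Suc i" using p by (simp add: i_def)
  have fS: "fib (Suc j) = fib j + fib i" by (simp add: ji)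
  define n' where "n' = n - fib j"
  have fj0: "fib j > 0" using p by (simp add: fib_neq_0_nat)
  have n'1: "1 \<le> n'" "n' \<le> fib i" "n' < n" using p fS fj0 unfolding n'_def by linarith+
  have an: "a n = fib (Suc j) - a n'" unfolding n'_def j_def by (rule a_rec[OF less.prems])
  have bnd: "1 \<le> a n' \<and> a n' \<le> fib i \<and> (4 \<le> j \<longrightarrow> a n' < fib i)"
  proof (cases "n' = 1")
    case True
    have "fib i \<ge> 1" using p by (simp add: ji fib_neq_0_nat Suc_le_eq)
    moreover have "4 \<le> j \<Longrightarrow> fib i > 1"
    proof -
      assume "4 \<le> j"
      then have "fib 2 < fib i" using ji by (intro fib_strict) auto
      then show "fib i > 1" by simp
    qed
    moreover have "a n' = 1" using True a1 by simp
    ultimately show ?thesis by auto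
  next
    case False
    then have n'2: "2 \<le> n'" using n'1 by simp
    define j' where "j' = fib_index n'"
    from fib_index_props[OF n'2] have p': "2 \<le> j'" "fib j' < n'" "n' \<le> fib (Suc j')"
      by (auto simp: j'_def)
    have "fib j' < fib i" using p' n'1 by linarith
    then have "j' < i" by (rule fib_lt_imp)
    then have "fib (Suc j') \<le> fib i" by (intro fib_mono) simp
    moreover have IH: "fib j' \<le> a n' \<and> a n' < fib (Suc j')" using less.IH[OF n'1(3) n'2] by (simp add: j'_def)
    moreover have "fib j' \<ge> 1" using p' by (simp add: fib_neq_0_nat Suc_le_eq)
    ultimately show ?thesis by linarith
  qed
  have sum: "a n + a n' = fib (Suc j)" using an bnd fS by linarith
  have g1: "fib j \<le> a n" using sum bnd fS by linarith
  have g2: "a n < fib (Suc j)" using sum bnd by linarith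
  have g3: "4 \<le> j \<longrightarrow> fib j < a n" using sum bnd fS by linarith
  show ?case unfolding j_def[symmetric] using g1 g2 g3 by blast
qed

lemma a_pos: "1 \<le> n \<Longrightarrow> 1 \<le> a n"
proof -
  assume "1 \<le> n"
  then consider "n = 1" | "2 \<le> n" by linarith
  then show ?thesis
  proof cases
    case 1
    have "a n = 1" using 1 a1 by simp
    then show ?thesis by simp
  next
    case 2
    from bounds[OF 2] fib_index_props[OF 2] have "fib (fib_index n) \<le> a n" "2 \<le> fib_index n" by auto
    moreover have "fib (fib_index n) \<ge> 1" using \<open>2 \<le> fib_index n\<close> by (simp add: fib_neq_0_nat Suc_le_eq)
    ultimately show ?thesis by linarith
  qed
qed

lemma fib_ge2: "3 \<le> j \<Longrightarrow> 2 \<le> fib j"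
  using fib_mono[of 3 j] by (simp add: numeral_3_eq_3)

lemma fib3[simp]: "fib 3 = 2" by (simp add: numeral_eq_Suc)
lemma fib4[simp]: "fib 4 = 3" by (simp add: numeral_eq_Suc)

lemma a1': "a (Suc 0) = 1" using a1 by simp
lemma a1'': "a (Suc 0) = Suc 0" using a1 by simp
lemma fib3': "fib (Suc 2) = 2" by (simp add: numeral_2_eq_2)
lemma fib4': "fib (Suc 3) = 3" by (simp add: numeral_3_eq_3)

lemma a2: "a 2 = 1"
proof -
  have "fib_index 2 = 2" by (rule fib_index_eq) (simp_all add: fib3')
  then show ?thesis using a_rec[of 2] by (simp add: fib3 numeral_3_eq_3[symmetric] a1')
qed

lemma a3: "a 3 = 2"
proof -
  have "fib_index 3 = 3" by (rule fib_index_eq) (simp_all add: fib3 fib4')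
  then show ?thesis using a_rec[of 3] by (simp add: fib3 fib4 a1')
qed

lemma P0: "{n. a n = 0} = {0}"
proof (intro set_eqI iffI)
  fix n assume "n \<in> {n. a n = 0}"
  then show "n \<in> {0}" using a_pos[of n] by (cases n) auto
qed (simp add: a0)

lemma blk:
  assumes "2 \<le> n" "a n = m"
  obtains j where "fib_index n = j" "2 \<le> j" "fib j < n" "n \<le> fib (Suc j)"
    "fib j \<le> m" "m < fib (Suc j)" "4 \<le> j \<Longrightarrow> fib j < m"
  using bounds[OF assms(1)] fib_index_props[OF assms(1)] assms(2) by auto

lemma P1: "{n. a n = 1} = {1,2}"
proof (intro set_eqI iffI)
  fix n assume "n \<in> {n. a n = 1}"
  then have an: "a n = 1" by simp
  show "n \<in> {1,2}"
  proof (cases "2 \<le> n")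
    case True
    obtain j where j: "fib_index n = j" "2 \<le> j" "fib j < n" "n \<le> fib (Suc j)" "fib j \<le> 1" "1 < fib (Suc j)"
      "4 \<le> j \<Longrightarrow> fib j < 1" by (rule blk[OF True an]) blast
    have "j = 2"
    proof (rule ccontr)
      assume "j \<noteq> 2" then have "3 \<le> j" using j by simp
      then show False using fib_ge2[of j] j(5) by simp
    qed
    then show ?thesis using j by (simp add: fib3')
  next
    case False
    then have "n = 0 \<or> n = 1" by auto
    then show ?thesis using an a0 a1 by auto
  qed
qed (auto simp: a1 a1'' a2)

lemma P2: "{n. a n = 2} = {3}"
proof (intro set_eqI iffI)
  fix n assume "n \<in> {n. a n = 2}"
  then have an: "a n = 2" by simp
  show "n \<in> {3}"
  proof (cases "2 \<le> n")
    case True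
    obtain j where j: "fib_index n = j" "2 \<le> j" "fib j < n" "n \<le> fib (Suc j)" "fib j \<le> 2" "2 < fib (Suc j)"
      "4 \<le> j \<Longrightarrow> fib j < 2" by (rule blk[OF True an]) blast
    have "j \<noteq> 2"
    proof
      assume "j = 2" then show False using j(6) by (simp add: fib3')
    qed
    moreover have "\<not> 4 \<le> j" using j(7) fib_ge2[of j] by linarith
    ultimately have "j = 3" using j by simp
    then show ?thesis using j by (simp add: fib3 fib4')
  next
    case False
    then have "n = 0 \<or> n = 1" by auto
    then show ?thesis using an a0 a1 by auto
  qed
qed (auto simp: a3)

lemma PF:
  assumes j: "3 \<le> j"
  shows "{n. a n = fib (Suc j)} = {}"
proof (rule ccontr)
  assume "{n. a n = fib (Suc j)} \<noteq> {}"
  then obtain n where an: "a n = fib (Suc j)" by auto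
  have f2: "fib (Suc j) \<ge> 2" using j fib_ge2[of "Suc j"] by simp
  have "2 \<le> n"
  proof (rule ccontr)
    assume "\<not> 2 \<le> n" then have "n = 0 \<or> n = 1" by auto
    then show False using an f2 a0 a1 by auto
  qed
  obtain i where i: "fib_index n = i" "2 \<le> i" "fib i < n" "n \<le> fib (Suc i)" "fib i \<le> fib (Suc j)" "fib (Suc j) < fib (Suc i)"
    "4 \<le> i \<Longrightarrow> fib i < fib (Suc j)" by (rule blk[OF \<open>2 \<le> n\<close> an]) blast
  have "Suc j < Suc i" using i(6) by (rule fib_lt_imp)
  then have "4 \<le> i" "Suc j \<le> i" using j by auto
  then have "fib (Suc j) \<le> fib i" by (intro fib_mono)
  then show False using i(7) \<open>4 \<le> i\<close> by linarith
qed

lemma PR: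
  assumes j: "4 \<le> j" and m1: "fib j < m" and m2: "m < fib (Suc j)"
  shows "{n. a n = m} = (\<lambda>n. n + fib j) ` {n. a n = fib (Suc j) - m}"
proof -
  define i where "i = j - 1"
  have ji: "j = Suc i" using j by (simp add: i_def)
  have fS: "fib (Suc j) = fib j + fib i" by (simp add: ji)
  have fi: "fib i \<ge> 2" using j fib_ge2[of i] by (simp add: i_def)
  show ?thesis
  proof (intro set_eqI iffI)
    fix n assume "n \<in> {n. a n = m}"
    then have an: "a n = m" by simp
    have "fib j \<ge> 3" using j fib_mono[of 4 j] by (simp add: fib4)
    have "2 \<le> n"
    proof (rule ccontr)
      assume "\<not> 2 \<le> n" then have "n = 0 \<or> n = 1" by auto
      then show False using an m1 \<open>fib j \<ge> 3\<close> a0 a1 by auto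
    qed
    obtain k where k: "fib_index n = k" "2 \<le> k" "fib k < n" "n \<le> fib (Suc k)"
      "fib k \<le> m" "m < fib (Suc k)" "4 \<le> k \<Longrightarrow> fib k < m" by (rule blk[OF \<open>2 \<le> n\<close> an]) blast
    have "k < Suc j" using k(5) m2 fib_lt_imp[of k "Suc j"] by linarith
    moreover have "j < Suc k" using k(6) m1 fib_lt_imp[of j "Suc k"] by linarith
    ultimately have kj: "k = j" by simp
    have an2: "a n = fib (Suc j) - a (n - fib j)" using a_rec[OF \<open>2 \<le> n\<close>] k kj by simp
    have "n - fib j \<ge> 1" using k kj by simp
    then have "a (n - fib j) \<ge> 1" by (rule a_pos)
    then have "a (n - fib j) = fib (Suc j) - m" using an an2 m1 m2 by linarith
    moreover have "n = (n - fib j) + fib j" using k kj by simp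
    ultimately show "n \<in> (\<lambda>n. n + fib j) ` {n. a n = fib (Suc j) - m}"
      by (intro image_eqI[where x="n - fib j"]) simp_all
  next
    fix n assume "n \<in> (\<lambda>n. n + fib j) ` {n. a n = fib (Suc j) - m}"
    then obtain n' where n: "n = n' + fib j" and an': "a n' = fib (Suc j) - m" by auto
    have v: "1 \<le> a n'" "a n' < fib i" using an' m1 m2 fS by linarith+
    have n'0: "n' \<noteq> 0"
    proof
      assume "n' = 0" then show False using v a0 by simp
    qed
    have n'i: "n' \<le> fib i"
    proof (cases "n' = 1")
      case True then show ?thesis using fi by simp
    next
      case False
      then have "2 \<le> n'" using n'0 by simp
      obtain k where k: "fib_index n' = k" "2 \<le> k" "fib k < n'" "n' \<le> fib (Suc k)"
      "fib k \<le> a n'" "a n' < fib (Suc k)" "4 \<le> k \<Longrightarrow> fib k < a n'" by (rule blk[OF \<open>2 \<le> n'\<close> refl]) blast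
      have "k < i" using k v fib_lt_imp[of k i] by linarith
      then have "fib (Suc k) \<le> fib i" by (intro fib_mono) simp
      then show ?thesis using k by linarith
    qed
    have "n' \<ge> 1" using n'0 by simp
    then have fidx: "fib_index n = j" using j n n'i fS by (intro fib_index_eq) linarith+
    have "fib j \<ge> 2" using j fib_ge2[of j] by simp
    then have "2 \<le> n" using n by simp
    then have "a n = fib (Suc (fib_index n)) - a (n - fib (fib_index n))" by (rule a_rec)
    moreover have "n - fib j = n'" using n by simp
    ultimately have "a n = fib (Suc j) - a n'" using fidx by simp
    then show "n \<in> {n. a n = m}" using an' m2 by simp
  qed
qed

lemma main: "card {n. a n = m} = 2 \<longleftrightarrow> \<not> T m"
proof (induction m rule: less_induct)
  case (less m)
  consider "m = 0" | "m = 1" | "m = 2" | "3 \<le> m" by linarith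
  then show ?case
  proof cases
    case 1 then show ?thesis using P0 T0 by simp
  next
    case 2 then show ?thesis using P1 T1 by simp
  next
    case 3
    have "T (fib (Suc 2))" by (rule T_fib) simp
    then have "T 2" by (simp add: fib3')
    then show ?thesis using P2 3 by simp
  next
    case 4
    then have m2: "2 \<le> m" by simp
    define j where "j = fib_index m"
    from fib_index_props[OF m2] have p: "2 \<le> j" "fib j < m" "m \<le> fib (Suc j)" by (auto simp: j_def)
    show ?thesis
    proof (cases "m = fib (Suc j)")
      case True
      have "j \<noteq> 2" using True 4 by (auto simp: fib3')
      then have "3 \<le> j" using p by simp
      then show ?thesis using PF[of j] T_fib[of j] p True by simp
    next
      case False
      then have mlt: "m < fib (Suc j)" using p by simp
      have "j \<noteq> 2" using p mlt by (auto simp: fib3')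
      moreover have "j \<noteq> 3" using p mlt by (auto simp: fib4')
      ultimately have j4: "4 \<le> j" using p by simp
      define v where "v = fib (Suc j) - m"
      have "fib (Suc j) \<le> fib j + m"
      proof -
        have jj: "j = Suc (j - 1)" using p by simp
        have "fib (Suc (Suc (j - 1))) = fib (Suc (j - 1)) + fib (j - 1)" by simp
        then have "fib (Suc j) = fib j + fib (j - 1)" using jj by metis
        moreover have "fib (j - 1) \<le> fib j" by (intro fib_mono) simp
        ultimately show ?thesis using p by linarith
      qed
      then have vm: "v < m" using p unfolding v_def by linarith
      have PRv: "{n. a n = m} = (\<lambda>n. n + fib j) ` {n. a n = v}"
        unfolding v_def by (rule PR[OF j4 p(2) mlt])
      have "card {n. a n = m} = card ((\<lambda>n. n + fib j) ` {n. a n = v})"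
        by (simp only: PRv)
      also have "\<dots> = card {n. a n = v}" by (rule card_image) (simp add: inj_on_def)
      finally have "card {n. a n = m} = card {n. a n = v}" .
      moreover have "T m \<longleftrightarrow> T v" unfolding v_def by (rule T_refl[OF j4 p(2) mlt])
      ultimately show ?thesis using less.IH[OF vm] by (simp only:)
    qed
  qed
qed

theorem proposition3:
  "{m :: nat. card {n :: nat. A105774 n = m} = 2}
   = - {m. \<exists>k :: nat. int m = \<lfloor>(1 + sqrt 5) / 2 * real k + 1 / 2\<rfloor>}"
proof (intro set_eqI)
  fix m
  show "m \<in> {m :: nat. card {n :: nat. A105774 n = m} = 2} \<longleftrightarrow>
    m \<in> - {m. \<exists>k :: nat. int m = \<lfloor>(1 + sqrt 5) / 2 * real k + 1 / 2\<rfloor>}"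
  proof -
    have e1: "(\<exists>k :: nat. int m = \<lfloor>(1 + sqrt 5) / 2 * real k + 1 / 2\<rfloor>) = T m"
      by (simp only: T_def)
    show ?thesis by (simp only: Compl_iff mem_Collect_eq e1 main)
  qed
qed

end
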